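(* Let $\Omega$ be strictly convex. For a trajectory $X(s)=x+(s-t)v$, $V(s)=v$, define $$\alpha(s)=\xi^2(X(s))+[V(s)\cdot\nabla\xi(X(s))]^2-2\{V(s)\cdot\nabla^2\xi(X(s))\cdot V(s)\}\xi(X(s)).$$ Suppose $X(s)\in\bar\Omega$ for $t_1\le s\le t_2$. Then there exists a constant $C_\xi>0$ (depending only on $\xi$) such that $$e^{C_\xi(|V(t_1)|+1)t_1}\alpha(t_1)\le e^{C_\xi(|V(t_1)|+1)t_2}\alpha(t_2),\qquad e^{-C_\xi(|V(t_1)|+1)t_1}\alpha(t_1)\ge e^{-C_\xi(|V(t_1)|+1)t_2}\alpha(t_2).$$
   Context: $\Omega=\{x\in\mathbb{R}^3:\xi(x)<0\}$ is connected and bounded, $\xi$ smooth with $\nabla\xi\neq0$ on $\{\xi=0\}$. Strictly convex means: there is $c_\xi>0$ with $\partial_{ij}\xi(x)\zeta^i\zeta^j\ge c_\xi|\zeta|^2$ for all $x$ with $\xi(x)\le0$ and all $\zeta\in\mathbb{R}^3$. *)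

theory Defs
  imports "HOL-Analysis.Analysis"
begin

fun iter_partial :: "3 list \<Rightarrow> (real^3 \<Rightarrow> real) \<Rightarrow> real^3 \<Rightarrow> real" where
  "iter_partial [] f = f"
| "iter_partial (i # is) f = (\<lambda>x. frechet_derivative (iter_partial is f) (at x) (axis i 1))"

definition smooth3 :: "(real^3 \<Rightarrow> real) \<Rightarrow> bool" where
  "smooth3 f \<longleftrightarrow> (\<forall>is x. iter_partial is f differentiable (at x))"

definition grad3 :: "(real^3 \<Rightarrow> real) \<Rightarrow> real^3 \<Rightarrow> real^3" where
  "grad3 f x = (\<chi> i. iter_partial [i] f x)"

definition hess3 :: "(real^3 \<Rightarrow> real) \<Rightarrow> real^3 \<Rightarrow> real^3^3" where
  "hess3 f x = (\<chi> i j. iter_partial [i, j] f x)"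

definition strictly_convex_domain :: "(real^3 \<Rightarrow> real) \<Rightarrow> bool" where
  "strictly_convex_domain \<xi> \<longleftrightarrow>
     (\<exists>c>0. \<forall>x \<zeta>. \<xi> x \<le> 0 \<longrightarrow> \<zeta> \<bullet> (hess3 \<xi> x *v \<zeta>) \<ge> c * (norm \<zeta>)^2)"

definition alpha :: "(real^3 \<Rightarrow> real) \<Rightarrow> real^3 \<Rightarrow> real \<Rightarrow> real^3 \<Rightarrow> real \<Rightarrow> real" where
  "alpha \<xi> x t v s =
     (let X = x + (s - t) *\<^sub>R v in
        (\<xi> X)^2 + (v \<bullet> grad3 \<xi> X)^2 - 2 * (v \<bullet> (hess3 \<xi> X *v v)) * \<xi> X)"

end

theory Submission
  imports Defs
begin

lemma lin_expand:
  fixes F :: "real^3 \<Rightarrow> real"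
  assumes "linear F"
  shows "F v = (\<Sum>i\<in>UNIV. v$i * F (axis i 1))"
proof -
  have "F v = F (\<Sum>i\<in>UNIV. v$i *\<^sub>R axis i 1)"
    using basis_expansion[of v] by (simp add: scalar_mult_eq_scaleR)
  also have "\<dots> = (\<Sum>i\<in>UNIV. v$i * F (axis i 1))"
    using assms by (simp add: linear_sum linear_scale)
  finally show ?thesis .
qed

lemma line_deriv:
  fixes f :: "real^3 \<Rightarrow> real"
  assumes "f differentiable (at (x + (s - t) *\<^sub>R v))"
  shows "((\<lambda>s. f (x + (s - t) *\<^sub>R v)) has_real_derivative
           (\<Sum>i\<in>UNIV. v$i * iter_partial [i] f (x + (s - t) *\<^sub>R v))) (at s)"
proof -
  let ?X = "x + (s - t) *\<^sub>R v"
  let ?F = "frechet_derivative f (at ?X)"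
  have fd: "(f has_derivative ?F) (at ?X)"
    using assms frechet_derivative_works by blast
  have lin: "linear ?F" using assms linear_frechet_derivative by blast
  have id: "((\<lambda>s. x + (s - t) *\<^sub>R v) has_derivative (\<lambda>h. h *\<^sub>R v)) (at s)"
    by (auto intro!: derivative_eq_intros simp: algebra_simps)
  have "((\<lambda>s. f (x + (s - t) *\<^sub>R v)) has_derivative (\<lambda>h. ?F (h *\<^sub>R v))) (at s)"
    using has_derivative_compose[OF id fd] by (simp add: o_def)
  moreover have "(\<lambda>h. ?F (h *\<^sub>R v)) = (*) (\<Sum>i\<in>UNIV. v$i * iter_partial [i] f ?X)"
    using lin lin_expand[OF lin, of v] by (auto simp: linear_scale mult.commute)
  ultimately show ?thesis by (simp add: has_field_derivative_def)
qed

lemma ip_deriv: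
  assumes "smooth3 \<xi>"
  shows "((\<lambda>s. iter_partial is \<xi> (x + (s - t) *\<^sub>R v)) has_real_derivative
           (\<Sum>j\<in>UNIV. v$j * iter_partial (j # is) \<xi> (x + (s - t) *\<^sub>R v))) (at s)"
  using line_deriv[of "iter_partial is \<xi>" x s t v] assms unfolding smooth3_def by simp

lemma hess_quad:
  "v \<bullet> (hess3 \<xi> y *v v) = (\<Sum>i\<in>UNIV. v$i * (\<Sum>j\<in>UNIV. v$j * iter_partial [j, i] \<xi> y))"
proof -
  have "v \<bullet> (hess3 \<xi> y *v v) = (\<Sum>i\<in>UNIV. v$i * (\<Sum>j\<in>UNIV. iter_partial [i, j] \<xi> y * v$j))"
    by (simp add: inner_vec_def hess3_def matrix_vector_mult_def del: iter_partial.simps)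
  also have "\<dots> = (\<Sum>i\<in>UNIV. (\<Sum>j\<in>UNIV. v$i * v$j * iter_partial [i, j] \<xi> y))"
    by (simp add: sum_distrib_left algebra_simps del: iter_partial.simps)
  also have "\<dots> = (\<Sum>j\<in>UNIV. (\<Sum>i\<in>UNIV. v$i * v$j * iter_partial [i, j] \<xi> y))"
    by (rule sum.swap)
  also have "\<dots> = (\<Sum>i\<in>UNIV. v$i * (\<Sum>j\<in>UNIV. v$j * iter_partial [j, i] \<xi> y))"
    by (simp add: sum_distrib_left algebra_simps del: iter_partial.simps)
  finally show ?thesis .
qed

lemma alpha_eq:
  "alpha \<xi> x t v s =
     (\<xi> (x + (s - t) *\<^sub>R v))^2 + (\<Sum>i\<in>UNIV. v$i * iter_partial [i] \<xi> (x + (s - t) *\<^sub>R v))^2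
     - 2 * (\<Sum>i\<in>UNIV. v$i * (\<Sum>j\<in>UNIV. v$j * iter_partial [j, i] \<xi> (x + (s - t) *\<^sub>R v)))
         * \<xi> (x + (s - t) *\<^sub>R v)"
proof -
  let ?X = "x + (s - t) *\<^sub>R v"
  have 1: "v \<bullet> grad3 \<xi> ?X = (\<Sum>i\<in>UNIV. v$i * iter_partial [i] \<xi> ?X)"
    by (simp add: inner_vec_def grad3_def del: iter_partial.simps)
  show ?thesis using 1 hess_quad[where v=v and \<xi>=\<xi> and y="?X"]
    by (simp add: alpha_def Let_def del: iter_partial.simps)
qed

lemma alpha_deriv:
  fixes x v :: "real^3" and t s :: real
  assumes "smooth3 \<xi>"
  defines "a \<equiv> \<lambda>s. \<xi> (x + (s - t) *\<^sub>R v)"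
    and "G \<equiv> \<lambda>s. (\<Sum>i\<in>UNIV. v$i * iter_partial [i] \<xi> (x + (s - t) *\<^sub>R v))"
    and "T \<equiv> \<lambda>s. (\<Sum>i\<in>UNIV. v$i * (\<Sum>j\<in>UNIV. v$j * (\<Sum>k\<in>UNIV. v$k *
                    iter_partial [k, j, i] \<xi> (x + (s - t) *\<^sub>R v))))"
  shows "((\<lambda>s. alpha \<xi> x t v s) has_real_derivative (2 * a s * G s - 2 * T s * a s)) (at s)"
proof -
  define Q where "Q \<equiv> \<lambda>s. (\<Sum>i\<in>UNIV. v$i * (\<Sum>j\<in>UNIV. v$j * iter_partial [j, i] \<xi> (x + (s - t) *\<^sub>R v)))"
  have da: "(a has_real_derivative G s) (at s)" for s
    using ip_deriv[OF assms(1), of "[]" x t v s] unfolding a_def G_def by simp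
  have dG: "(G has_real_derivative Q s) (at s)" for s
    unfolding G_def Q_def
    by (intro DERIV_sum DERIV_cmult ip_deriv[OF assms(1)])
  have dQ: "(Q has_real_derivative T s) (at s)" for s
    unfolding T_def Q_def
    by (intro DERIV_sum DERIV_cmult ip_deriv[OF assms(1)])
  have eq: "(\<lambda>s. alpha \<xi> x t v s) = (\<lambda>s. (a s)^2 + (G s)^2 - 2 * Q s * a s)"
    by (simp add: alpha_eq a_def G_def Q_def)
  have "((\<lambda>s. (a s)^2 + (G s)^2 - 2 * Q s * a s) has_real_derivative
     (2 * a s * G s + 2 * G s * Q s - 2 * (T s * a s + Q s * G s))) (at s)"
    by (auto intro!: derivative_eq_intros da dG dQ simp: algebra_simps)
  then show ?thesis unfolding eq by (rule DERIV_cong) (simp add: algebra_simps)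
qed

lemma sum_vbound:
  fixes v :: "real^3"
  assumes "\<And>i. \<bar>v$i\<bar> \<le> n"
  shows "\<bar>\<Sum>i\<in>UNIV. v$i * f i\<bar> \<le> n * (\<Sum>i\<in>UNIV. \<bar>f i\<bar>)"
proof -
  have "\<bar>\<Sum>i\<in>UNIV. v$i * f i\<bar> \<le> (\<Sum>i\<in>UNIV. \<bar>v$i * f i\<bar>)" by (rule sum_abs)
  also have "\<dots> \<le> (\<Sum>i\<in>UNIV. n * \<bar>f i\<bar>)"
    by (intro sum_mono) (simp add: abs_mult assms mult_right_mono)
  finally show ?thesis by (simp add: sum_distrib_left)
qed

lemma T_bound:
  fixes v :: "real^3"
  shows "\<bar>\<Sum>i\<in>UNIV. v$i * (\<Sum>j\<in>UNIV. v$j * (\<Sum>k\<in>UNIV. v$k * a k j i))\<bar>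
     \<le> (norm v)^3 * (\<Sum>i\<in>UNIV. \<Sum>j\<in>UNIV. \<Sum>k\<in>UNIV. \<bar>a k j i\<bar>)"
proof -
  let ?n = "norm v"
  have vb: "\<And>i. \<bar>v$i\<bar> \<le> ?n" by (rule component_le_norm_cart)
  have n0: "0 \<le> ?n" by simp
  have "\<bar>\<Sum>i\<in>UNIV. v$i * (\<Sum>j\<in>UNIV. v$j * (\<Sum>k\<in>UNIV. v$k * a k j i))\<bar>
      \<le> ?n * (\<Sum>i\<in>UNIV. \<bar>\<Sum>j\<in>UNIV. v$j * (\<Sum>k\<in>UNIV. v$k * a k j i)\<bar>)"
    by (rule sum_vbound[OF vb])
  also have "\<dots> \<le> ?n * (\<Sum>i\<in>UNIV. ?n * (\<Sum>j\<in>UNIV. \<bar>\<Sum>k\<in>UNIV. v$k * a k j i\<bar>))"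
    by (intro mult_left_mono sum_mono sum_vbound[OF vb] n0)
  also have "\<dots> \<le> ?n * (\<Sum>i\<in>UNIV. ?n * (\<Sum>j\<in>UNIV. ?n * (\<Sum>k\<in>UNIV. \<bar>a k j i\<bar>)))"
    by (intro mult_left_mono sum_mono sum_vbound[OF vb] n0)
  also have "\<dots> = ?n^3 * (\<Sum>i\<in>UNIV. \<Sum>j\<in>UNIV. \<Sum>k\<in>UNIV. \<bar>a k j i\<bar>)"
    by (simp add: sum_distrib_left power3_eq_cube mult.assoc)
  finally show ?thesis .
qed

lemma arith_key:
  fixes a g q T c M n :: real
  assumes a: "a \<le> 0" and q: "q \<ge> c * n^2" and c: "c > 0" and T: "\<bar>T\<bar> \<le> M * n^3"
    and M: "M \<ge> 0" and n: "n \<ge> 0"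
  shows "\<bar>2 * a * g - 2 * T * a\<bar> \<le> (1 + M / c) * (n + 1) * (a^2 + g^2 - 2 * q * a)"
proof -
  define P1 where "P1 = a^2 + g^2"
  define P2 where "P2 = - 2 * q * a"
  have q0: "q \<ge> 0" using q c by (metis mult_nonneg_nonneg less_imp_le zero_le_power2 order_trans)
  have P1: "P1 \<ge> 0" unfolding P1_def by simp
  have P2: "P2 \<ge> 0" unfolding P2_def using a q0 by (simp add: mult_nonneg_nonpos)
  have h1: "\<bar>2 * a * g\<bar> \<le> P1"
  proof -
    have "0 \<le> (\<bar>a\<bar> - \<bar>g\<bar>)^2" by simp
    then show ?thesis unfolding P1_def by (simp add: power2_eq_square abs_mult algebra_simps)
  qed
  have h2: "\<bar>2 * T * a\<bar> \<le> (M / c) * n * P2"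
  proof -
    have "\<bar>2 * T * a\<bar> = 2 * \<bar>T\<bar> * (-a)" using a by (simp add: abs_mult)
    also have "\<dots> \<le> 2 * (M * n^3) * (-a)" using T a by (intro mult_right_mono mult_left_mono) auto
    also have "\<dots> = (M / c) * n * (2 * (c * n^2) * (-a))" using c by (simp add: power2_eq_square power3_eq_cube field_simps)
    also have "\<dots> \<le> (M / c) * n * (2 * q * (-a))"
      using q a M c n by (intro mult_left_mono mult_right_mono) auto
    also have "\<dots> = (M / c) * n * P2" unfolding P2_def by simp
    finally show ?thesis .
  qed
  have Mc: "M / c \<ge> 0" using M c by simp
  have "\<bar>2 * a * g - 2 * T * a\<bar> \<le> P1 + (M / c) * n * P2"
    using h1 h2 by linarith
  also have "\<dots> \<le> (1 + M / c) * (n + 1) * (P1 + P2)"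
  proof -
    have "P1 \<le> 1 * 1 * P1" by simp
    have one: "1 \<le> (1 + M / c) * (n + 1)"
      using mult_mono[of 1 "1 + M/c" 1 "n+1"] Mc n by simp
    have "P1 \<le> (1 + M / c) * (n + 1) * P1"
      using mult_right_mono[OF one P1] by simp
    moreover have "(M / c) * n * P2 \<le> (1 + M / c) * (n + 1) * P2"
      using Mc n P2 by (intro mult_right_mono mult_mono) auto
    ultimately show ?thesis by (simp add: distrib_left)
  qed
  finally show ?thesis unfolding P1_def P2_def by simp
qed

theorem mainTheorem10:
  fixes \<xi> :: "real^3 \<Rightarrow> real"
  assumes smooth: "smooth3 \<xi>"
    and conn: "connected {x. \<xi> x < 0}"
    and bdd: "bounded {x. \<xi> x < 0}"
    and nondeg: "\<forall>x. \<xi> x = 0 \<longrightarrow> grad3 \<xi> x \<noteq> 0"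
    and convex: "strictly_convex_domain \<xi>"
  shows "\<exists>C>0. \<forall>x v t t1 t2. t1 \<le> t2 \<and>
            (\<forall>s\<in>{t1..t2}. x + (s - t) *\<^sub>R v \<in> closure {y. \<xi> y < 0}) \<longrightarrow>
              exp (C * (norm v + 1) * t1) * alpha \<xi> x t v t1
                \<le> exp (C * (norm v + 1) * t2) * alpha \<xi> x t v t2
            \<and> exp (- C * (norm v + 1) * t1) * alpha \<xi> x t v t1
                \<ge> exp (- C * (norm v + 1) * t2) * alpha \<xi> x t v t2"
proof -
  obtain c where c: "c > 0" and cv: "\<And>y \<zeta>. \<xi> y \<le> 0 \<Longrightarrow> \<zeta> \<bullet> (hess3 \<xi> y *v \<zeta>) \<ge> c * (norm \<zeta>)^2"
    using convex unfolding strictly_convex_domain_def by blast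
  have cont: "continuous_on UNIV (iter_partial is \<xi>)" for "is"
    using smooth unfolding smooth3_def
    by (auto intro!: continuous_at_imp_continuous_on differentiable_imp_continuous_within)
  define S where "S = closure {y. \<xi> y < 0}"
  have cS: "compact S" unfolding S_def using bdd by (simp add: compact_closure)
  define F where "F = (\<lambda>y. \<Sum>i\<in>UNIV. \<Sum>j\<in>UNIV. \<Sum>k\<in>UNIV. \<bar>iter_partial [k, j, i] \<xi> y\<bar>)"
  have cF: "continuous_on UNIV F" unfolding F_def
    by (intro continuous_intros cont)
  have "bounded (F ` S)"
    by (rule compact_imp_bounded, rule compact_continuous_image[OF continuous_on_subset[OF cF subset_UNIV] cS])
  then obtain B where B: "B > 0" and FB0: "\<forall>z\<in>F ` S. norm z \<le> B"
    unfolding bounded_pos by blast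
  have FB: "norm (F y) \<le> B" if "y \<in> S" for y using FB0 that by blast
  have cxi: "continuous_on UNIV \<xi>" using cont[of "[]"] by simp
  have xS: "\<xi> y \<le> 0" if "y \<in> S" for y
  proof -
    have "closed {y. \<xi> y \<le> 0}" using cxi by (simp add: closed_Collect_le continuous_on_const)
    then have "S \<subseteq> {y. \<xi> y \<le> 0}" unfolding S_def by (intro closure_minimal) auto
    then show ?thesis using that by auto
  qed
  define C where "C = 1 + B / c"
  have C0: "C > 0" unfolding C_def using B c by (simp add: add_pos_pos)
  show ?thesis
  proof (intro exI[of _ C] conjI[OF C0] allI impI)
    fix x v :: "real^3" and t t1 t2 :: real
    assume h: "t1 \<le> t2 \<and> (\<forall>s\<in>{t1..t2}. x + (s - t) *\<^sub>R v \<in> closure {y. \<xi> y < 0})"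
    define K where "K = C * (norm v + 1)"
    define a where "a = (\<lambda>s. \<xi> (x + (s - t) *\<^sub>R v))"
    define G where "G = (\<lambda>s. (\<Sum>i\<in>UNIV. v$i * iter_partial [i] \<xi> (x + (s - t) *\<^sub>R v)))"
    define T where "T = (\<lambda>s. (\<Sum>i\<in>UNIV. v$i * (\<Sum>j\<in>UNIV. v$j * (\<Sum>k\<in>UNIV. v$k *
                    iter_partial [k, j, i] \<xi> (x + (s - t) *\<^sub>R v)))))"
    define D where "D = (\<lambda>s. 2 * a s * G s - 2 * T s * a s)"
    have dal: "((\<lambda>s. alpha \<xi> x t v s) has_real_derivative D s) (at s)" for s
      unfolding D_def a_def G_def T_def by (rule alpha_deriv[OF smooth])
    have bnd: "\<bar>D s\<bar> \<le> K * alpha \<xi> x t v s" if s: "s \<in> {t1..t2}" for s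
    proof -
      let ?X = "x + (s - t) *\<^sub>R v"
      have XS: "?X \<in> S" using h s unfolding S_def by blast
      define q where "q = (\<Sum>i\<in>UNIV. v$i * (\<Sum>j\<in>UNIV. v$j * iter_partial [j, i] \<xi> ?X))"
      have al: "alpha \<xi> x t v s = (a s)^2 + (G s)^2 - 2 * q * a s"
        unfolding a_def G_def q_def by (rule alpha_eq)
      have q: "q \<ge> c * (norm v)^2" using cv[OF xS[OF XS], of v] hess_quad[where v=v and \<xi>=\<xi> and y="?X"] q_def by simp
      have "\<bar>T s\<bar> \<le> (norm v)^3 * F ?X"
        unfolding T_def F_def by (rule T_bound)
      also have "\<dots> \<le> B * (norm v)^3"
        using FB[OF XS] mult_left_mono[of "F ?X" B "(norm v)^3"] by (simp add: mult.commute)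
      finally have Tb: "\<bar>T s\<bar> \<le> B * (norm v)^3" .
      have "\<bar>D s\<bar> \<le> (1 + B / c) * (norm v + 1) * ((a s)^2 + (G s)^2 - 2 * q * a s)"
        unfolding D_def
        by (rule arith_key[OF _ q c Tb]) (use xS[OF XS] B in \<open>auto simp: a_def\<close>)
      then show ?thesis unfolding al K_def C_def .
    qed
    have "exp (K * t1) * alpha \<xi> x t v t1 \<le> exp (K * t2) * alpha \<xi> x t v t2"
    proof (rule DERIV_nonneg_imp_nondecreasing[where f = "\<lambda>s. exp (K * s) * alpha \<xi> x t v s"])
      show "t1 \<le> t2" using h by simp
      fix s assume s1: "t1 \<le> s" and s2: "s \<le> t2"
      have s: "s \<in> {t1..t2}" using s1 s2 by simp
      have "((\<lambda>s. exp (K * s) * alpha \<xi> x t v s) has_real_derivative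
              exp (K * s) * (K * alpha \<xi> x t v s + D s)) (at s)"
        by (auto intro!: derivative_eq_intros dal simp: algebra_simps)
      moreover have "exp (K * s) * (K * alpha \<xi> x t v s + D s) \<ge> 0"
        using bnd[of s] s by (intro mult_nonneg_nonneg) auto
      ultimately show "\<exists>y. ((\<lambda>s. exp (K * s) * alpha \<xi> x t v s) has_real_derivative y) (at s) \<and> 0 \<le> y"
        by blast
    qed
    moreover have "exp (- K * t1) * alpha \<xi> x t v t1 \<ge> exp (- K * t2) * alpha \<xi> x t v t2"
    proof (rule DERIV_nonpos_imp_nonincreasing[where f = "\<lambda>s. exp (- K * s) * alpha \<xi> x t v s"])
      show "t1 \<le> t2" using h by simp
      fix s assume s1: "t1 \<le> s" and s2: "s \<le> t2"
      have s: "s \<in> {t1..t2}" using s1 s2 by simp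
      have "((\<lambda>s. exp (- K * s) * alpha \<xi> x t v s) has_real_derivative
              exp (- K * s) * (D s - K * alpha \<xi> x t v s)) (at s)"
        by (auto intro!: derivative_eq_intros dal simp: algebra_simps)
      moreover have "exp (- K * s) * (D s - K * alpha \<xi> x t v s) \<le> 0"
        using bnd[of s] s by (intro mult_nonneg_nonpos) auto
      ultimately show "\<exists>y. ((\<lambda>s. exp (- K * s) * alpha \<xi> x t v s) has_real_derivative y) (at s) \<and> y \<le> 0"
        by blast
    qed
    ultimately show "exp (C * (norm v + 1) * t1) * alpha \<xi> x t v t1
                \<le> exp (C * (norm v + 1) * t2) * alpha \<xi> x t v t2
            \<and> exp (- C * (norm v + 1) * t1) * alpha \<xi> x t v t1
                \<ge> exp (- C * (norm v + 1) * t2) * alpha \<xi> x t v t2"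
      unfolding K_def by simp
  qed
qed

end
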